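(* Suppose Assumption 1 holds and there is $\eta\in[0,1)$ such that every $d^k$ satisfies the $\eta$-inexactness condition for $Q_k=Q^{x^k}_{H_k}$ ($f$ need not be convex). For Algorithm 1, if $H_k\succeq\sigma I$ for some $\sigma>0$ and all $k$, then for all $k\ge0$ $$\min_{0\le t\le k}|Q_t(d^t)|\le\frac{F(x^0)-F^*}{\gamma(k+1)\min_{0\le t\le k}\alpha_t}\le\frac{F(x^0)-F^*}{\gamma(k+1)}\max\left\{1,\ \frac{(1+\sqrt\eta)L}{2\beta(1-\gamma)\sigma}\right\}.$$ For Algorithm 2 (with $H^0_k\succ0$ for Variant 1), with $Q_t=Q^{x^t}_{H_t}$ for the final $H_t$, $$\min_{0\le t\le k}|Q_t(d^t)|\le\frac{F(x^0)-F^*}{\gamma(k+1)}.$$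
   Context: Problem setting: $F(x)=f(x)+\psi(x)$ on $\mathbb{R}^n$, $F^*=\inf F$. Assumption 1: $f$ is differentiable with $L$-Lipschitz continuous gradient ($L>0$); $\psi:\mathbb{R}^n\to\mathbb{R}\cup\{+\infty\}$ is convex, proper and closed; $F$ is bounded below; the solution set $\Omega=\{x:F(x)=F^*\}$ is nonempty. For $x\in\mathbb{R}^n$ and symmetric $H$, $Q^x_H(d)\coloneqq\nabla f(x)^Td+\frac12d^THd+\psi(x+d)-\psi(x)$, $Q^*=\inf_dQ^x_H(d)$; $d$ satisfies the $\eta$-inexactness condition if $Q^x_H(d)\le(1-\eta)Q^*$. Algorithm 1: given $\beta,\gamma\in(0,1)$, $x^0$, fixed $\eta\in[0,1)$; for $k=0,1,\dots$: choose symmetric $H_k$ with $Q_k\coloneqq Q^{x^k}_{H_k}$ strongly convex; compute $d^k$ satisfying the $\eta$-inexactness condition for $Q_k$; let $\Delta_k=\nabla f(x^k)^Td^k+\psi(x^k+d^k)-\psi(x^k)$; let $\alpha_k=\beta^i$ for the smallest nonnegative integer $i$ with $F(x^k+\alpha_kd^k)\le F(x^k)+\alpha_k\gamma\Delta_k$; set $x^{k+1}=x^k+\alpha_kd^k$. Algorithm 2: given $\beta\in(0,1)$, $\gamma\in(0,1]$, $x^0$, fixed $\eta\in[0,1)$; for each $k$: choose symmetric $H^0_k$ (in Variant 1, $H^0_k\succ0$); set $\alpha_k\leftarrow1$, $H_k\leftarrow H^0_k$, compute $d^k$ satisfying the $\eta$-inexactness condition for $Q^{x^k}_{H_k}$;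 while $F(x^k)-F(x^k+d^k)\ge-\gamma Q^{x^k}_{H_k}(d^k)\ge0$ fails: Variant 1 sets $\alpha_k\leftarrow\beta\alpha_k$, $H_k\leftarrow H^0_k/\alpha_k$; Variant 2 sets $H_k\leftarrow H^0_k+\alpha_k^{-1}I$, then $\alpha_k\leftarrow\beta\alpha_k$; then $d^k$ is recomputed satisfying the $\eta$-inexactness condition. Finally $x^{k+1}=x^k+d^k$; "final $H_k$" is the accepted matrix. *)

theory Defs
  imports "HOL-Analysis.Analysis" "HOL-Library.Extended_Real"
begin

(* Extended-valued functions psi : R^n -> R \<union> {+\<infinity>} are modelled as real^'n \<Rightarrow> ereal. *)

definition ereal_convex :: "(real^'n \<Rightarrow> ereal) \<Rightarrow> bool" where
  "ereal_convex \<phi> \<longleftrightarrow> (\<forall>x y. \<forall>t\<in>{0..1::real}.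
      \<phi> ((1 - t) *\<^sub>R x + t *\<^sub>R y) \<le> ereal (1 - t) * \<phi> x + ereal t * \<phi> y)"

(* strongly convex: \<phi> - (\<mu>/2)\<parallel>.\<parallel>^2 convex for some \<mu> > 0, written out *)
definition ereal_strongly_convex :: "(real^'n \<Rightarrow> ereal) \<Rightarrow> bool" where
  "ereal_strongly_convex \<phi> \<longleftrightarrow> (\<exists>\<mu>>0. \<forall>x y. \<forall>t\<in>{0..1::real}.
      \<phi> ((1 - t) *\<^sub>R x + t *\<^sub>R y)
        \<le> ereal (1 - t) * \<phi> x + ereal t * \<phi> y - ereal (\<mu> / 2 * t * (1 - t) * (norm (x - y))\<^sup>2))"

definition ereal_proper :: "(real^'n \<Rightarrow> ereal) \<Rightarrow> bool" where
  "ereal_proper \<phi> \<longleftrightarrow> (\<forall>x. \<phi> x \<noteq> -\<infinity>) \<and> (\<exists>x. \<phi> x \<noteq> \<infinity>)"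

definition ereal_closed_fun :: "(real^'n \<Rightarrow> ereal) \<Rightarrow> bool" where
  "ereal_closed_fun \<phi> \<longleftrightarrow> closed {p :: (real^'n) \<times> real. \<phi> (fst p) \<le> ereal (snd p)}"

definition sym_mat :: "real^'n^'n \<Rightarrow> bool" where
  "sym_mat H \<longleftrightarrow> transpose H = H"

definition psd_ge :: "real^'n^'n \<Rightarrow> real \<Rightarrow> bool" where
  "psd_ge H \<sigma> \<longleftrightarrow> (\<forall>v. \<sigma> * (v \<bullet> v) \<le> v \<bullet> (H *v v))"

definition pos_def_mat :: "real^'n^'n \<Rightarrow> bool" where
  "pos_def_mat H \<longleftrightarrow> (\<forall>v. v \<noteq> 0 \<longrightarrow> 0 < v \<bullet> (H *v v))"

definition Fobj :: "(real^'n \<Rightarrow> real) \<Rightarrow> (real^'n \<Rightarrow> ereal) \<Rightarrow> real^'n \<Rightarrow> ereal" where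
  "Fobj f \<psi> x = ereal (f x) + \<psi> x"

definition Fstar :: "(real^'n \<Rightarrow> real) \<Rightarrow> (real^'n \<Rightarrow> ereal) \<Rightarrow> ereal" where
  "Fstar f \<psi> = Inf (range (Fobj f \<psi>))"

(* Q^x_H(d); g is the gradient of f *)
definition quadQ :: "(real^'n \<Rightarrow> real^'n) \<Rightarrow> (real^'n \<Rightarrow> ereal) \<Rightarrow> real^'n \<Rightarrow> real^'n^'n \<Rightarrow> real^'n \<Rightarrow> ereal" where
  "quadQ g \<psi> x H d = ereal (g x \<bullet> d + 1/2 * (d \<bullet> (H *v d))) + \<psi> (x + d) - \<psi> x"

definition Qstar :: "(real^'n \<Rightarrow> real^'n) \<Rightarrow> (real^'n \<Rightarrow> ereal) \<Rightarrow> real^'n \<Rightarrow> real^'n^'n \<Rightarrow> ereal" where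
  "Qstar g \<psi> x H = Inf (range (quadQ g \<psi> x H))"

definition inexact :: "real \<Rightarrow> (real^'n \<Rightarrow> real^'n) \<Rightarrow> (real^'n \<Rightarrow> ereal) \<Rightarrow> real^'n \<Rightarrow> real^'n^'n \<Rightarrow> real^'n \<Rightarrow> bool" where
  "inexact \<eta> g \<psi> x H d \<longleftrightarrow> quadQ g \<psi> x H d \<le> ereal (1 - \<eta>) * Qstar g \<psi> x H"

definition Delta :: "(real^'n \<Rightarrow> real^'n) \<Rightarrow> (real^'n \<Rightarrow> ereal) \<Rightarrow> real^'n \<Rightarrow> real^'n \<Rightarrow> ereal" where
  "Delta g \<psi> x d = ereal (g x \<bullet> d) + \<psi> (x + d) - \<psi> x"

definition armijo :: "(real^'n \<Rightarrow> real) \<Rightarrow> (real^'n \<Rightarrow> real^'n) \<Rightarrow> (real^'n \<Rightarrow> ereal) \<Rightarrow> real \<Rightarrow> real^'n \<Rightarrow> real^'n \<Rightarrow> real \<Rightarrow> bool" where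
  "armijo f g \<psi> \<gamma> x d s \<longleftrightarrow> Fobj f \<psi> (x + s *\<^sub>R d) \<le> Fobj f \<psi> x + ereal (s * \<gamma>) * Delta g \<psi> x d"

definition alg1_run :: "(real^'n \<Rightarrow> real) \<Rightarrow> (real^'n \<Rightarrow> real^'n) \<Rightarrow> (real^'n \<Rightarrow> ereal) \<Rightarrow> real \<Rightarrow> real \<Rightarrow> real
     \<Rightarrow> (nat \<Rightarrow> real^'n) \<Rightarrow> (nat \<Rightarrow> real^'n^'n) \<Rightarrow> (nat \<Rightarrow> real^'n) \<Rightarrow> (nat \<Rightarrow> real) \<Rightarrow> bool" where
  "alg1_run f g \<psi> \<beta> \<gamma> \<eta> x H d \<alpha> \<longleftrightarrow>
     0 < \<beta> \<and> \<beta> < 1 \<and> 0 < \<gamma> \<and> \<gamma> < 1 \<and>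
     (\<forall>k. sym_mat (H k) \<and> ereal_strongly_convex (quadQ g \<psi> (x k) (H k))
        \<and> inexact \<eta> g \<psi> (x k) (H k) (d k)
        \<and> (\<exists>i::nat. \<alpha> k = \<beta> ^ i \<and> armijo f g \<psi> \<gamma> (x k) (d k) (\<beta> ^ i)
                 \<and> (\<forall>j<i. \<not> armijo f g \<psi> \<gamma> (x k) (d k) (\<beta> ^ j)))
        \<and> x (Suc k) = x k + \<alpha> k *\<^sub>R d k)"

(* Trial matrix after j rejections in Algorithm 2 (variant v \<in> {1,2}) *)
definition alg2_trialH :: "nat \<Rightarrow> real \<Rightarrow> real^'n^'n \<Rightarrow> nat \<Rightarrow> real^'n^'n" where
  "alg2_trialH v \<beta> H0 j =
     (if v = 1 then (1 / \<beta> ^ j) *\<^sub>R H0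
      else if j = 0 then H0 else H0 + (1 / \<beta> ^ (j - 1)) *\<^sub>R mat 1)"

definition alg2_accept :: "(real^'n \<Rightarrow> real) \<Rightarrow> (real^'n \<Rightarrow> real^'n) \<Rightarrow> (real^'n \<Rightarrow> ereal) \<Rightarrow> real \<Rightarrow> real^'n \<Rightarrow> real^'n^'n \<Rightarrow> real^'n \<Rightarrow> bool" where
  "alg2_accept f g \<psi> \<gamma> x H d \<longleftrightarrow>
     Fobj f \<psi> x - Fobj f \<psi> (x + d) \<ge> - ereal \<gamma> * quadQ g \<psi> x H d
     \<and> - ereal \<gamma> * quadQ g \<psi> x H d \<ge> 0"

(* A run of Algorithm 2: H0 initial matrices, H the final (accepted) matrices, d accepted directions;
   the inner loop: trial directions dtr 0..m for trial matrices, first m-1 rejected, the m-th accepted *)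
definition alg2_run :: "nat \<Rightarrow> (real^'n \<Rightarrow> real) \<Rightarrow> (real^'n \<Rightarrow> real^'n) \<Rightarrow> (real^'n \<Rightarrow> ereal) \<Rightarrow> real \<Rightarrow> real \<Rightarrow> real
     \<Rightarrow> (nat \<Rightarrow> real^'n) \<Rightarrow> (nat \<Rightarrow> real^'n^'n) \<Rightarrow> (nat \<Rightarrow> real^'n^'n) \<Rightarrow> (nat \<Rightarrow> real^'n) \<Rightarrow> bool" where
  "alg2_run v f g \<psi> \<beta> \<gamma> \<eta> x H0 H d \<longleftrightarrow>
     (v = 1 \<or> v = 2) \<and> 0 < \<beta> \<and> \<beta> < 1 \<and> 0 < \<gamma> \<and> \<gamma> \<le> 1 \<and>
     (\<forall>k. sym_mat (H0 k) \<and> (v = 1 \<longrightarrow> pos_def_mat (H0 k))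
        \<and> (\<exists>(m::nat) (dtr :: nat \<Rightarrow> real^'n).
              (\<forall>j\<le>m. inexact \<eta> g \<psi> (x k) (alg2_trialH v \<beta> (H0 k) j) (dtr j))
            \<and> (\<forall>j<m. \<not> alg2_accept f g \<psi> \<gamma> (x k) (alg2_trialH v \<beta> (H0 k) j) (dtr j))
            \<and> alg2_accept f g \<psi> \<gamma> (x k) (alg2_trialH v \<beta> (H0 k) m) (dtr m)
            \<and> H k = alg2_trialH v \<beta> (H0 k) m \<and> d k = dtr m)
        \<and> x (Suc k) = x k + d k)"

end

theory Submission
  imports Defs
begin



lemma descent:
  fixes f :: "real^'n \<Rightarrow> real" and g :: "real^'n \<Rightarrow> real^'n"
  assumes grad: "\<And>x. (f has_derivative (\<lambda>h. g x \<bullet> h)) (at x)"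
    and lip: "\<And>x y. norm (g x - g y) \<le> L * norm (x - y)"
    and s: "0 \<le> s"
  shows "f (x + s *\<^sub>R d) \<le> f x + s * (g x \<bullet> d) + L / 2 * s^2 * (norm d)^2"
proof -
  define \<phi> where "\<phi> t = f (x + t *\<^sub>R d) - t * (g x \<bullet> d) - L/2 * t^2 * (norm d)^2" for t
  have D: "DERIV \<phi> t :> (g (x + t *\<^sub>R d) \<bullet> d - g x \<bullet> d - L * t * (norm d)^2)" for t
  proof -
    have 1: "((\<lambda>t. x + t *\<^sub>R d) has_derivative (\<lambda>u. u *\<^sub>R d)) (at t)"
      by (auto intro!: derivative_eq_intros)
    have 2: "((\<lambda>t. f (x + t *\<^sub>R d)) has_derivative (\<lambda>u. g (x + t *\<^sub>R d) \<bullet> (u *\<^sub>R d))) (at t)"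
      using has_derivative_compose[OF 1 grad] by simp
    have 3: "((\<lambda>t. f (x + t *\<^sub>R d)) has_real_derivative (g (x + t *\<^sub>R d) \<bullet> d)) (at t)"
      using 2 unfolding has_field_derivative_def by (simp add: mult.commute[of _ "g (x + t *\<^sub>R d) \<bullet> d"])
    show ?thesis unfolding \<phi>_def
      by (rule derivative_eq_intros 3 | simp)+ (simp add: power2_eq_square algebra_simps)?
  qed
  have "\<phi> s \<le> \<phi> 0"
  proof (rule DERIV_nonpos_imp_nonincreasing[OF s])
    fix t assume t: "0 \<le> t" "t \<le> s"
    have "g (x + t *\<^sub>R d) \<bullet> d - g x \<bullet> d = (g (x + t *\<^sub>R d) - g x) \<bullet> d" by (simp add: inner_diff_left)
    also have "\<dots> \<le> norm (g (x + t *\<^sub>R d) - g x) * norm d" by (rule norm_cauchy_schwarz)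
    also have "\<dots> \<le> (L * norm (t *\<^sub>R d)) * norm d"
      using lip[of "x + t *\<^sub>R d" x] by (intro mult_right_mono) auto
    also have "\<dots> = L * t * (norm d)^2" using t by (simp add: power2_eq_square)
    finally show "\<exists>y. DERIV \<phi> t :> y \<and> y \<le> 0" using D[of t] by (intro exI[of _ "g (x + t *\<^sub>R d) \<bullet> d - g x \<bullet> d - L * t * (norm d)^2"]) auto
  qed
  thus ?thesis unfolding \<phi>_def by simp
qed



lemma alg_key:
  fixes a D \<eta> :: real
  assumes a: "a \<ge> 0" and eta: "0 \<le> \<eta>" "\<eta> < 1"
    and H: "\<And>t. 0 \<le> t \<Longrightarrow> t \<le> 1 \<Longrightarrow> D + a/2 \<le> (1-\<eta>)*(t*D + t^2*a/2)"
  shows "a/(1+sqrt \<eta>) \<le> -D"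
proof -
  define r where "r = sqrt \<eta>"
  have r: "0 \<le> r" "r < 1" "r^2 = \<eta>" using eta by (auto simp: r_def real_sqrt_lt_1_iff)
  have h0: "D + a/2 \<le> 0" using H[of 0] by simp
  show ?thesis
  proof (cases "a = 0")
    case True thus ?thesis using h0 by simp
  next
    case False
    hence ap: "a > 0" using a by simp
    show ?thesis
    proof (cases "-D \<ge> a")
      case True
      have "a/(1+r) \<le> a" using ap r by (simp add: divide_le_eq)
      thus ?thesis using True unfolding r_def by linarith
    next
      case False
      define \<delta> where "\<delta> = -D"
      have d0: "0 < \<delta>" using h0 ap \<delta>_def by linarith
      have da: "\<delta> < a" using False \<delta>_def by simp
      have "D + a/2 \<le> (1-\<eta>)*((\<delta>/a)*D + (\<delta>/a)^2*a/2)"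
        using H[of "\<delta>/a"] d0 da ap by (simp add: divide_le_eq)
      hence "-\<delta> + a/2 \<le> (1-\<eta>)*(-(\<delta>^2/(2*a)))" unfolding \<delta>_def
        using ap by (simp add: power2_eq_square field_simps)
      hence "2*a*(-\<delta> + a/2) \<le> 2*a*((1-\<eta>)*(-(\<delta>^2/(2*a))))" using ap by (intro mult_left_mono) auto
      moreover have "2*a*((1-\<eta>)*(-(\<delta>^2/(2*a)))) = -((1-\<eta>)*\<delta>^2)" using ap by (simp add: field_simps)
      moreover have "2*a*(-\<delta> + a/2) = a^2 - 2*a*\<delta>" by (simp add: algebra_simps power2_eq_square)
      ultimately have q: "(1-\<eta>)*\<delta>^2 - 2*a*\<delta> + a^2 \<le> 0" by linarith
      have "a/(1+r) \<le> \<delta>"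
      proof (rule ccontr)
        assume "\<not> ?thesis"
        hence "(1+r)*\<delta> < a" using r by (simp add: field_simps)
        moreover have "(1-r)*\<delta> < a" using r d0 da by (smt (verit) mult_left_le_one_le)
        ultimately have "0 < (a - (1-r)*\<delta>) * (a - (1+r)*\<delta>)" by simp
        moreover have "(a - (1-r)*\<delta>) * (a - (1+r)*\<delta>) = (1-\<eta>)*\<delta>^2 - 2*a*\<delta> + a^2"
          using r(3) by (simp add: algebra_simps power2_eq_square)
        ultimately show False using q by simp
      qed
      thus ?thesis using \<delta>_def r_def by simp
    qed
  qed
qed



lemma step1:
  fixes g :: "real^'n \<Rightarrow> real^'n" and \<psi> :: "real^'n \<Rightarrow> ereal"
  assumes proper: "ereal_proper \<psi>" and convex: "ereal_convex \<psi>"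
   and p0: "\<psi> x = ereal p0" and inex: "inexact \<eta> g \<psi> x H d"
   and eta: "0 \<le> \<eta>" "\<eta> < 1"
  obtains p1 where "\<psi> (x+d) = ereal p1"
    "Delta g \<psi> x d = ereal (g x \<bullet> d + p1 - p0)"
    "quadQ g \<psi> x H d = ereal (g x \<bullet> d + p1 - p0 + d \<bullet> (H *v d) / 2)"
    "\<And>t. 0 \<le> t \<Longrightarrow> t \<le> 1 \<Longrightarrow> (g x \<bullet> d + p1 - p0) + d \<bullet> (H *v d) / 2
        \<le> (1-\<eta>) * (t * (g x \<bullet> d + p1 - p0) + t^2 * (d \<bullet> (H *v d)) / 2)"
proof -
  have Q0: "quadQ g \<psi> x H 0 = 0" unfolding quadQ_def using p0 by simp
  have Qs: "Qstar g \<psi> x H \<le> 0" unfolding Qstar_def using Q0 by (metis INF_lower UNIV_I)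
  have Qd: "quadQ g \<psi> x H d \<le> ereal (1-\<eta>) * Qstar g \<psi> x H" using inex unfolding inexact_def by simp
  have "ereal (1-\<eta>) * Qstar g \<psi> x H \<le> ereal (1-\<eta>) * 0"
    using Qs eta by (intro ereal_mult_left_mono) auto
  hence Qd0: "quadQ g \<psi> x H d \<le> 0" using Qd by simp
  have "\<psi> (x+d) \<noteq> \<infinity>"
  proof
    assume "\<psi> (x+d) = \<infinity>"
    hence "quadQ g \<psi> x H d = \<infinity>" unfolding quadQ_def using p0 by simp
    thus False using Qd0 by simp
  qed
  moreover have "\<psi> (x+d) \<noteq> -\<infinity>" using proper unfolding ereal_proper_def by simp
  ultimately obtain p1 where p1: "\<psi> (x+d) = ereal p1" by (cases "\<psi> (x+d)") auto
  define D where "D = g x \<bullet> d + p1 - p0"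
  define a where "a = d \<bullet> (H *v d)"
  have QdE: "quadQ g \<psi> x H d = ereal (D + a/2)" unfolding quadQ_def D_def a_def using p0 p1 by simp
  have DE: "Delta g \<psi> x d = ereal D" unfolding Delta_def D_def using p0 p1 by simp
  have key: "D + a/2 \<le> (1-\<eta>) * (t * D + t^2 * a / 2)" if t: "0 \<le> t" "t \<le> 1" for t
  proof -
    have "\<psi> ((1 - t) *\<^sub>R x + t *\<^sub>R (x+d)) \<le> ereal (1 - t) * \<psi> x + ereal t * \<psi> (x+d)"
      using convex t unfolding ereal_convex_def by auto
    moreover have "(1 - t) *\<^sub>R x + t *\<^sub>R (x+d) = x + t *\<^sub>R d" by (simp add: algebra_simps)
    ultimately have pt: "\<psi> (x + t *\<^sub>R d) \<le> ereal ((1-t)*p0 + t*p1)" using p0 p1 by simp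
    moreover have "\<psi> (x + t *\<^sub>R d) \<noteq> -\<infinity>" using proper unfolding ereal_proper_def by simp
    ultimately obtain pt where pt': "\<psi> (x + t *\<^sub>R d) = ereal pt" "pt \<le> (1-t)*p0 + t*p1"
      by (cases "\<psi> (x + t *\<^sub>R d)") auto
    have "quadQ g \<psi> x H (t *\<^sub>R d) = ereal (t * (g x \<bullet> d) + t^2 * a / 2 + pt - p0)"
      unfolding quadQ_def a_def using p0 pt'
      by (simp add: matrix_vector_mult_scaleR power2_eq_square algebra_simps)
    hence "quadQ g \<psi> x H (t *\<^sub>R d) \<le> ereal (t * D + t^2 * a / 2)"
      using pt' unfolding D_def by (simp add: algebra_simps)
    hence "Qstar g \<psi> x H \<le> ereal (t * D + t^2 * a / 2)" unfolding Qstar_def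
      by (metis (no_types, lifting) INF_lower UNIV_I order_trans)
    hence "ereal (1-\<eta>) * Qstar g \<psi> x H \<le> ereal (1-\<eta>) * ereal (t * D + t^2 * a / 2)"
      using eta by (intro ereal_mult_left_mono) auto
    with Qd QdE have "ereal (D + a/2) \<le> ereal ((1-\<eta>) * (t * D + t^2 * a / 2))"
      by (metis order_trans times_ereal.simps(1))
    thus ?thesis by simp
  qed
  show ?thesis
    using that[OF p1 DE[unfolded D_def] QdE[unfolded D_def a_def] key[unfolded D_def a_def]] by simp
qed



lemma step_alg1:
  fixes f :: "real^'n \<Rightarrow> real" and g :: "real^'n \<Rightarrow> real^'n" and \<psi> :: "real^'n \<Rightarrow> ereal"
  assumes grad: "\<And>x. (f has_derivative (\<lambda>h. g x \<bullet> h)) (at x)"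
    and lip: "\<And>x y. norm (g x - g y) \<le> L * norm (x - y)" and L: "L > 0"
    and proper: "ereal_proper \<psi>" and convex: "ereal_convex \<psi>"
    and p0: "\<psi> x = ereal p0" and inex: "inexact \<eta> g \<psi> x H d"
    and eta: "0 \<le> \<eta>" "\<eta> < 1"
    and psd: "psd_ge H \<sigma>" and sig: "\<sigma> > 0"
    and \<beta>: "0 < \<beta>" "\<beta> < 1" and \<gamma>: "0 < \<gamma>" "\<gamma> < 1"
    and arm: "armijo f g \<psi> \<gamma> x d (\<beta> ^ i)" and minI: "\<forall>j<i. \<not> armijo f g \<psi> \<gamma> x d (\<beta> ^ j)"
  obtains q where "quadQ g \<psi> x H d = ereal q" "q \<le> 0"
    "Fobj f \<psi> (x + \<beta>^i *\<^sub>R d) \<le> ereal (f x + p0 + \<beta>^i * \<gamma> * q)"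
    "min 1 (\<beta> * (2 * (1-\<gamma>) * \<sigma> / ((1 + sqrt \<eta>) * L))) \<le> \<beta>^i"
proof -
  obtain p1 where p1: "\<psi> (x+d) = ereal p1"
    and DE: "Delta g \<psi> x d = ereal (g x \<bullet> d + p1 - p0)"
    and QE: "quadQ g \<psi> x H d = ereal (g x \<bullet> d + p1 - p0 + d \<bullet> (H *v d) / 2)"
    and K: "\<And>t. 0 \<le> t \<Longrightarrow> t \<le> 1 \<Longrightarrow> (g x \<bullet> d + p1 - p0) + d \<bullet> (H *v d) / 2
        \<le> (1-\<eta>) * (t * (g x \<bullet> d + p1 - p0) + t^2 * (d \<bullet> (H *v d)) / 2)"
    using step1[OF proper convex p0 inex eta] by blast
  define D where "D = g x \<bullet> d + p1 - p0"
  define a where "a = d \<bullet> (H *v d)"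
  define n2 where "n2 = (norm d)^2"
  have an: "\<sigma> * n2 \<le> a" using psd unfolding psd_ge_def a_def n2_def by (simp add: power2_norm_eq_inner)
  have n2: "n2 \<ge> 0" unfolding n2_def by simp
  have a0: "a \<ge> 0" using an n2 sig by (smt (verit) mult_nonneg_nonneg)
  have Dk: "a/(1+sqrt \<eta>) \<le> -D" using alg_key[OF a0 eta, of D] K unfolding D_def a_def by blast
  have q0: "D + a/2 \<le> 0" using K[of 0] unfolding D_def a_def by simp
  define r where "r = sqrt \<eta>"
  have r: "0 \<le> r" using eta r_def by simp
  define c where "c = 2 * (1-\<gamma>) * \<sigma> / ((1 + r) * L)"
  have cpos: "c > 0" unfolding c_def using \<gamma> sig r L by simp
  have Dk2: "\<sigma> * n2 / (1+r) \<le> -D" using Dk an r unfolding r_def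
    by (smt (verit) divide_right_mono)
  have armS: "armijo f g \<psi> \<gamma> x d s" if s: "0 < s" "s \<le> 1" "s \<le> c" for s
  proof -
    have ps: "\<psi> (x + s *\<^sub>R d) \<le> ereal ((1-s)*p0 + s*p1)"
    proof -
      have "\<psi> ((1 - s) *\<^sub>R x + s *\<^sub>R (x+d)) \<le> ereal (1 - s) * \<psi> x + ereal s * \<psi> (x+d)"
        using convex s unfolding ereal_convex_def by auto
      moreover have "(1 - s) *\<^sub>R x + s *\<^sub>R (x+d) = x + s *\<^sub>R d" by (simp add: algebra_simps)
      ultimately show ?thesis using p0 p1 by simp
    qed
    have fd: "f (x + s *\<^sub>R d) \<le> f x + s * (g x \<bullet> d) + L / 2 * s^2 * n2"
      using descent[OF grad lip, of s x d] s unfolding n2_def by simp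
    have "L * s / 2 \<le> (1-\<gamma>) * \<sigma> / (1+r)"
    proof -
      have "L * s \<le> L * c" using s L by simp
      also have "L * c = 2 * ((1-\<gamma>) * \<sigma> / (1+r))" proof -
        have "1 + r \<noteq> 0" "L \<noteq> 0" using r L by auto
        have "L * c = (2 * (1-\<gamma>) * \<sigma>) * (L / ((1 + r) * L))" unfolding c_def by simp
        also have "L / ((1 + r) * L) = 1 / (1+r)" using \<open>L \<noteq> 0\<close> by simp
        finally show ?thesis by simp
      qed
      finally show ?thesis by (simp add: mult.commute)
    qed
    hence "L * s / 2 * n2 \<le> (1-\<gamma>) * \<sigma> / (1+r) * n2" using n2 by (rule mult_right_mono)
    also have "\<dots> = (1-\<gamma>) * (\<sigma> * n2 / (1+r))" by simp
    also have "\<dots> \<le> (1-\<gamma>) * (-D)" using Dk2 \<gamma> by (intro mult_left_mono) auto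
    finally have "s * (L * s / 2 * n2) \<le> s * ((1-\<gamma>) * (-D))" using s by (intro mult_left_mono) auto
    hence real: "f (x + s *\<^sub>R d) + ((1-s)*p0 + s*p1) \<le> f x + p0 + s * \<gamma> * D"
      using fd unfolding D_def by (simp add: algebra_simps power2_eq_square)
    have "Fobj f \<psi> (x + s *\<^sub>R d) \<le> ereal (f (x + s *\<^sub>R d)) + ereal ((1-s)*p0 + s*p1)"
      unfolding Fobj_def using ps by (rule add_left_mono)
    also have "\<dots> \<le> ereal (f x + p0 + s * \<gamma> * D)" using real by simp
    also have "\<dots> = Fobj f \<psi> x + ereal (s * \<gamma>) * Delta g \<psi> x d"
      unfolding Fobj_def using p0 DE D_def by simp
    finally show ?thesis unfolding armijo_def .
  qed
  have lb: "min 1 (\<beta> * c) \<le> \<beta>^i"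
  proof (cases i)
    case 0 thus ?thesis by simp
  next
    case (Suc j)
    have nj: "\<not> armijo f g \<psi> \<gamma> x d (\<beta> ^ j)" using minI Suc by simp
    have "0 < \<beta>^j" "\<beta>^j \<le> 1" using \<beta> by (auto simp: power_le_one)
    hence "c < \<beta>^j" using armS nj by force
    hence "\<beta> * c \<le> \<beta> * \<beta>^j" using \<beta> by simp
    thus ?thesis using Suc by simp
  qed
  have "Fobj f \<psi> (x + \<beta>^i *\<^sub>R d) \<le> ereal (f x + p0 + \<beta>^i * \<gamma> * D)"
    using arm unfolding armijo_def Fobj_def using p0 DE D_def by simp
  also have "\<dots> \<le> ereal (f x + p0 + \<beta>^i * \<gamma> * (D + a/2))"
    using a0 \<beta> \<gamma> by (simp add: mult_left_mono)
  finally have Fd: "Fobj f \<psi> (x + \<beta>^i *\<^sub>R d) \<le> ereal (f x + p0 + \<beta>^i * \<gamma> * (D + a/2))" .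
  show ?thesis
    apply (rule that[of "D + a/2"])
    using QE q0 Fd lb unfolding D_def a_def c_def r_def by auto
qed



lemma telescope:
  fixes Fr w :: "nat \<Rightarrow> real"
  assumes w: "\<And>t. t \<le> k \<Longrightarrow> w t \<ge> 0" and c: "c > 0"
    and dec: "\<And>t. t \<le> k \<Longrightarrow> Fr (Suc t) \<le> Fr t - c * w t"
    and lo: "Fs \<le> Fr (Suc k)"
  shows "Min (w ` {..k}) \<le> (Fr 0 - Fs) / (c * real (k+1))"
proof -
  have "(\<Sum>t\<le>k. c * w t) \<le> (\<Sum>t\<le>k. Fr t - Fr (Suc t))"
    using dec by (intro sum_mono) force
  also have "\<dots> = Fr 0 - Fr (Suc k)"
    using sum_lessThan_telescope'[of Fr "Suc k"] by (simp add: lessThan_Suc_atMost)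
  finally have s1: "c * (\<Sum>t\<le>k. w t) \<le> Fr 0 - Fs" using lo by (simp add: sum_distrib_left)
  have "(\<Sum>t\<le>k. Min (w ` {..k})) \<le> (\<Sum>t\<le>k. w t)" by (intro sum_mono) auto
  hence "real (k+1) * Min (w ` {..k}) \<le> (\<Sum>t\<le>k. w t)" by simp
  hence "c * (real (k+1) * Min (w ` {..k})) \<le> c * (\<Sum>t\<le>k. w t)" using c by simp
  with s1 have "(c * real (k+1)) * Min (w ` {..k}) \<le> Fr 0 - Fs" by (simp add: mult.assoc)
  moreover have "c * real (k+1) > 0" using c by simp
  ultimately show ?thesis by (simp add: le_divide_eq mult.commute)
qed



lemma Fstar_fin:
  assumes proper: "ereal_proper \<psi>" and F_bdd: "\<exists>m::real. \<forall>x. ereal m \<le> Fobj f \<psi> x"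
  obtains fs where "Fstar f \<psi> = ereal fs" "\<And>y. ereal fs \<le> Fobj f \<psi> y"
proof -
  obtain m where m: "\<And>x. ereal m \<le> Fobj f \<psi> x" using F_bdd by blast
  obtain z where z: "\<psi> z \<noteq> \<infinity>" using proper unfolding ereal_proper_def by blast
  have lo: "ereal m \<le> Fstar f \<psi>" unfolding Fstar_def using m by (auto intro: Inf_greatest)
  have up: "Fstar f \<psi> \<le> Fobj f \<psi> y" for y unfolding Fstar_def by (auto intro: Inf_lower)
  have "Fobj f \<psi> z \<noteq> \<infinity>" using z unfolding Fobj_def by simp
  hence "Fstar f \<psi> \<noteq> \<infinity>" using up[of z] by auto
  moreover have "Fstar f \<psi> \<noteq> -\<infinity>" using lo by auto
  ultimately obtain fs where "Fstar f \<psi> = ereal fs" by (cases "Fstar f \<psi>") auto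
  thus ?thesis using that up by auto
qed

lemma ereal_bound_conv:
  fixes Q :: "nat \<Rightarrow> ereal" and w :: "nat \<Rightarrow> real"
  assumes Qw: "\<And>t. t \<le> k \<Longrightarrow> \<bar>Q t\<bar> = ereal (w t)"
    and b: "Min (w ` {..k}) \<le> B"
  shows "Min ((\<lambda>t. \<bar>Q t\<bar>) ` {..k}) \<le> ereal B"
proof -
  have "Min (w ` {..k}) \<in> w ` {..k}" by (intro Min_in) auto
  then obtain t0 where t0: "t0 \<in> {..k}" "Min (w ` {..k}) = w t0" by (metis imageE)
  have "Min ((\<lambda>t. \<bar>Q t\<bar>) ` {..k}) \<le> \<bar>Q t0\<bar>" using t0 by (intro Min_le) auto
  also have "\<dots> = ereal (w t0)" using Qw t0 by auto
  finally show ?thesis using b t0 by (metis ereal_less_eq(3) order_trans)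
qed



lemma part2:
  fixes f :: "real^'n \<Rightarrow> real" and g :: "real^'n \<Rightarrow> real^'n" and \<psi> :: "real^'n \<Rightarrow> ereal"
  assumes proper: "ereal_proper \<psi>" and F_bdd: "\<exists>m::real. \<forall>x. ereal m \<le> Fobj f \<psi> x"
    and run: "alg2_run v f g \<psi> \<beta> \<gamma> \<eta> x H0 H d"
  shows "Min ((\<lambda>t. \<bar>quadQ g \<psi> (x t) (H t) (d t)\<bar>) ` {..k})
               \<le> (Fobj f \<psi> (x 0) - Fstar f \<psi>) / ereal (\<gamma> * real (k + 1))"
proof -
  obtain fs where fs: "Fstar f \<psi> = ereal fs" "\<And>y. ereal fs \<le> Fobj f \<psi> y"
    using Fstar_fin[OF proper F_bdd] by blast
  have \<gamma>: "0 < \<gamma>" "\<gamma> \<le> 1" using run unfolding alg2_run_def by auto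
  have acc: "alg2_accept f g \<psi> \<gamma> (x t) (H t) (d t)" and xs: "x (Suc t) = x t + d t" for t
    using run unfolding alg2_run_def by metis+
  have cpos: "\<gamma> * real (k+1) > 0" using \<gamma> by simp
  show ?thesis
  proof (cases "Fobj f \<psi> (x 0) = \<infinity>")
    case True
    thus ?thesis using fs cpos by simp
  next
    case False
    have nm: "Fobj f \<psi> y \<noteq> -\<infinity>" for y using fs(2)[of y] by auto
    have stp: "\<exists>b q. Fobj f \<psi> (x (Suc t)) = ereal b \<and> quadQ g \<psi> (x t) (H t) (d t) = ereal q
               \<and> a - b \<ge> - \<gamma> * q \<and> - \<gamma> * q \<ge> 0"
      if a: "Fobj f \<psi> (x t) = ereal a" for t a
    proof -
      have A: "Fobj f \<psi> (x t) - Fobj f \<psi> (x (Suc t)) \<ge> - ereal \<gamma> * quadQ g \<psi> (x t) (H t) (d t)"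
        "- ereal \<gamma> * quadQ g \<psi> (x t) (H t) (d t) \<ge> 0"
        using acc[of t] xs[of t] unfolding alg2_accept_def by auto
      have "Fobj f \<psi> (x (Suc t)) \<noteq> \<infinity>"
      proof
        assume "Fobj f \<psi> (x (Suc t)) = \<infinity>"
        hence "- ereal \<gamma> * quadQ g \<psi> (x t) (H t) (d t) \<le> -\<infinity>" using A(1) a by simp
        hence "(0::ereal) \<le> -\<infinity>" using A(2) by (rule order_trans[rotated])
        thus False by simp
      qed
      then obtain b where b: "Fobj f \<psi> (x (Suc t)) = ereal b" using nm by (cases "Fobj f \<psi> (x (Suc t))") auto
      have "quadQ g \<psi> (x t) (H t) (d t) \<noteq> \<infinity>"
      proof
        assume "quadQ g \<psi> (x t) (H t) (d t) = \<infinity>"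
        thus False using A(2) \<gamma> by simp
      qed
      moreover have "quadQ g \<psi> (x t) (H t) (d t) \<noteq> -\<infinity>"
      proof
        assume "quadQ g \<psi> (x t) (H t) (d t) = -\<infinity>"
        thus False using A(1) \<gamma> a b by simp
      qed
      ultimately obtain q where q: "quadQ g \<psi> (x t) (H t) (d t) = ereal q"
        by (cases "quadQ g \<psi> (x t) (H t) (d t)") auto
      show ?thesis using A a b q by (intro exI[of _ b] exI[of _ q]) auto
    qed
    have fin: "\<exists>a. Fobj f \<psi> (x t) = ereal a" for t
    proof (induction t)
      case 0 thus ?case using False nm by (cases "Fobj f \<psi> (x 0)") auto
    next
      case (Suc t) thus ?case using stp by blast
    qed
    define Fr where "Fr t = real_of_ereal (Fobj f \<psi> (x t))" for t
    have FrE: "Fobj f \<psi> (x t) = ereal (Fr t)" for t using fin[of t] unfolding Fr_def by auto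
    define w where "w t = - real_of_ereal (quadQ g \<psi> (x t) (H t) (d t))" for t
    have W: "quadQ g \<psi> (x t) (H t) (d t) = ereal (- w t) \<and> Fr (Suc t) \<le> Fr t - \<gamma> * w t \<and> w t \<ge> 0" for t
    proof -
      obtain b q where "Fobj f \<psi> (x (Suc t)) = ereal b" "quadQ g \<psi> (x t) (H t) (d t) = ereal q"
               "Fr t - b \<ge> - \<gamma> * q" "- \<gamma> * q \<ge> 0"
        using stp[OF FrE[of t]] by blast
      moreover have "q \<le> 0" using \<open>- \<gamma> * q \<ge> 0\<close> \<gamma> by (simp add: mult_le_0_iff)
      ultimately show ?thesis unfolding w_def using FrE[of t] FrE[of "Suc t"] by auto
    qed
    have T: "Min (w ` {..k}) \<le> (Fr 0 - fs) / (\<gamma> * real (k+1))"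
      apply (rule telescope)
      using W \<gamma> fs(2)[of "x (Suc k)"] FrE[of "Suc k"] by auto
    have "Min ((\<lambda>t. \<bar>quadQ g \<psi> (x t) (H t) (d t)\<bar>) ` {..k}) \<le> ereal ((Fr 0 - fs) / (\<gamma> * real (k+1)))"
      apply (rule ereal_bound_conv[OF _ T])
      using W by auto
    moreover have "(ereal (Fr 0) - ereal fs) / ereal (\<gamma> * real (k+1)) = ereal ((Fr 0 - fs) / (\<gamma> * real (k+1)))"
      using cpos \<gamma> by simp
    ultimately show ?thesis using FrE[of 0] fs(1) by simp
  qed
qed



lemma part1:
  fixes f :: "real^'n \<Rightarrow> real" and g :: "real^'n \<Rightarrow> real^'n" and \<psi> :: "real^'n \<Rightarrow> ereal"
  assumes grad: "\<And>x. (f has_derivative (\<lambda>h. g x \<bullet> h)) (at x)"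
    and lip: "\<And>x y. norm (g x - g y) \<le> L * norm (x - y)" and L: "L > 0"
    and proper: "ereal_proper \<psi>" and convex: "ereal_convex \<psi>"
    and F_bdd: "\<exists>m::real. \<forall>x. ereal m \<le> Fobj f \<psi> x"
    and eta: "0 \<le> \<eta>" "\<eta> < 1"
    and run: "alg1_run f g \<psi> \<beta> \<gamma> \<eta> x H d \<alpha>" and sig: "\<sigma> > 0" and psd: "\<forall>k. psd_ge (H k) \<sigma>"
  shows "Min ((\<lambda>t. \<bar>quadQ g \<psi> (x t) (H t) (d t)\<bar>) ` {..k})
               \<le> (Fobj f \<psi> (x 0) - Fstar f \<psi>) / ereal (\<gamma> * real (k + 1) * Min (\<alpha> ` {..k}))
           \<and> (Fobj f \<psi> (x 0) - Fstar f \<psi>) / ereal (\<gamma> * real (k + 1) * Min (\<alpha> ` {..k}))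
               \<le> (Fobj f \<psi> (x 0) - Fstar f \<psi>) / ereal (\<gamma> * real (k + 1))
                  * ereal (max 1 ((1 + sqrt \<eta>) * L / (2 * \<beta> * (1 - \<gamma>) * \<sigma>)))"
proof -
  obtain fs where fs: "Fstar f \<psi> = ereal fs" "\<And>y. ereal fs \<le> Fobj f \<psi> y"
    using Fstar_fin[OF proper F_bdd] by blast
  have \<beta>: "0 < \<beta>" "\<beta> < 1" and \<gamma>: "0 < \<gamma>" "\<gamma> < 1" using run unfolding alg1_run_def by auto
  have inex: "inexact \<eta> g \<psi> (x t) (H t) (d t)" and xs: "x (Suc t) = x t + \<alpha> t *\<^sub>R d t" for t
    using run unfolding alg1_run_def by metis+
  obtain I where I: "\<And>t. \<alpha> t = \<beta> ^ I t \<and> armijo f g \<psi> \<gamma> (x t) (d t) (\<beta> ^ I t)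
                 \<and> (\<forall>j<I t. \<not> armijo f g \<psi> \<gamma> (x t) (d t) (\<beta> ^ j))"
    using run unfolding alg1_run_def by metis
  define u where "u = \<beta> * (2 * (1-\<gamma>) * \<sigma> / ((1 + sqrt \<eta>) * L))"
  have upos: "u > 0" unfolding u_def using \<beta> \<gamma> sig L eta by (simp add: add_pos_nonneg)
  have ST: "\<exists>q. quadQ g \<psi> (x t) (H t) (d t) = ereal q \<and> q \<le> 0
     \<and> Fobj f \<psi> (x (Suc t)) \<le> ereal (f (x t) + p0 + \<alpha> t * \<gamma> * q) \<and> min 1 u \<le> \<alpha> t"
    if p0: "\<psi> (x t) = ereal p0" for t p0
  proof -
    obtain q where "quadQ g \<psi> (x t) (H t) (d t) = ereal q" "q \<le> 0"
      "Fobj f \<psi> (x t + \<beta>^I t *\<^sub>R d t) \<le> ereal (f (x t) + p0 + \<beta>^I t * \<gamma> * q)"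
      "min 1 u \<le> \<beta>^I t"
      using step_alg1[OF grad lip L proper convex p0 inex eta psd[rule_format] sig \<beta> \<gamma>, of "I t"] I[of t]
      unfolding u_def by blast
    thus ?thesis using xs[of t] I[of t] by auto
  qed
  have apos: "\<alpha> t > 0" for t using I[of t] \<beta> by simp
  define m\<alpha> where "m\<alpha> = Min (\<alpha> ` {..k})"
  have m\<alpha>in: "m\<alpha> \<in> \<alpha> ` {..k}" unfolding m\<alpha>_def by (intro Min_in) auto
  have m\<alpha>pos: "m\<alpha> > 0" using m\<alpha>in apos by auto
  have m\<alpha>le: "m\<alpha> \<le> \<alpha> t" if "t \<le> k" for t unfolding m\<alpha>_def using that by (intro Min_le) auto
  have cpos: "\<gamma> * real (k + 1) > 0" using \<gamma> by simp
  have cpos2: "\<gamma> * real (k + 1) * m\<alpha> > 0" using \<gamma> m\<alpha>pos by simp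
  define M where "M = max 1 ((1 + sqrt \<eta>) * L / (2 * \<beta> * (1 - \<gamma>) * \<sigma>))"
  have M1: "M \<ge> 1" unfolding M_def by simp
  have nm: "Fobj f \<psi> y \<noteq> -\<infinity>" for y using fs(2)[of y] by auto
  show ?thesis
  proof (cases "Fobj f \<psi> (x 0) = \<infinity>")
    case True
    have "(\<infinity> - ereal fs) / ereal (\<gamma> * real (k + 1) * m\<alpha>) = \<infinity>" using cpos2 by simp
    moreover have "(\<infinity> - ereal fs) / ereal (\<gamma> * real (k + 1)) * ereal M = \<infinity>" using cpos M1 by simp
    ultimately show ?thesis using True fs(1) unfolding m\<alpha>_def[symmetric] M_def[symmetric] by simp
  next
    case False
    have fin: "\<psi> (x t) \<noteq> \<infinity>" for t
    proof (induction t)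
      case 0 thus ?case using False unfolding Fobj_def by auto
    next
      case (Suc t)
      have "\<psi> (x t) \<noteq> -\<infinity>" using proper unfolding ereal_proper_def by simp
      with Suc obtain p0 where "\<psi> (x t) = ereal p0" by (cases "\<psi> (x t)") auto
      from ST[OF this] obtain q where "Fobj f \<psi> (x (Suc t)) \<le> ereal (f (x t) + p0 + \<alpha> t * \<gamma> * q)" by blast
      thus ?case unfolding Fobj_def by auto
    qed
    define p where "p t = real_of_ereal (\<psi> (x t))" for t
    have pE: "\<psi> (x t) = ereal (p t)" for t
    proof -
      have "\<psi> (x t) \<noteq> -\<infinity>" using proper unfolding ereal_proper_def by simp
      thus ?thesis using fin[of t] unfolding p_def by (cases "\<psi> (x t)") auto
    qed
    define Fr where "Fr t = f (x t) + p t" for t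
    have FrE: "Fobj f \<psi> (x t) = ereal (Fr t)" for t unfolding Fobj_def Fr_def using pE by simp
    have "\<forall>t. \<exists>q. quadQ g \<psi> (x t) (H t) (d t) = ereal q \<and> q \<le> 0
     \<and> Fobj f \<psi> (x (Suc t)) \<le> ereal (f (x t) + p t + \<alpha> t * \<gamma> * q) \<and> min 1 u \<le> \<alpha> t"
      using ST[OF pE] by blast
    then obtain q where q: "\<And>t. quadQ g \<psi> (x t) (H t) (d t) = ereal (q t) \<and> q t \<le> 0
     \<and> Fobj f \<psi> (x (Suc t)) \<le> ereal (f (x t) + p t + \<alpha> t * \<gamma> * q t) \<and> min 1 u \<le> \<alpha> t"
      by metis
    define w where "w t = - q t" for t
    have W: "quadQ g \<psi> (x t) (H t) (d t) = ereal (- w t) \<and> w t \<ge> 0" for t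
      using q[of t] unfolding w_def by auto
    have dec: "Fr (Suc t) \<le> Fr t - \<gamma> * m\<alpha> * w t" if t: "t \<le> k" for t
    proof -
      have "Fr (Suc t) \<le> Fr t + \<alpha> t * \<gamma> * q t" using q[of t] FrE[of "Suc t"] unfolding Fr_def by simp
      moreover have "m\<alpha> * (\<gamma> * w t) \<le> \<alpha> t * (\<gamma> * w t)"
        using m\<alpha>le[OF t] W[of t] \<gamma> by (intro mult_right_mono) auto
      ultimately show ?thesis unfolding w_def by (simp add: algebra_simps)
    qed
    have T: "Min (w ` {..k}) \<le> (Fr 0 - fs) / (\<gamma> * m\<alpha> * real (k+1))"
      apply (rule telescope)
      using W dec \<gamma> m\<alpha>pos fs(2)[of "x (Suc k)"] FrE[of "Suc k"] by auto
    have "Min ((\<lambda>t. \<bar>quadQ g \<psi> (x t) (H t) (d t)\<bar>) ` {..k}) \<le> ereal ((Fr 0 - fs) / (\<gamma> * real (k + 1) * m\<alpha>))"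
      apply (rule ereal_bound_conv[of _ _ w])
      using W T by (auto simp: mult_ac)
    moreover have E1: "(ereal (Fr 0) - ereal fs) / ereal (\<gamma> * real (k + 1) * m\<alpha>) = ereal ((Fr 0 - fs) / (\<gamma> * real (k + 1) * m\<alpha>))"
      using cpos2 \<gamma> m\<alpha>pos by simp
    moreover have E2: "(ereal (Fr 0) - ereal fs) / ereal (\<gamma> * real (k + 1)) * ereal M = ereal ((Fr 0 - fs) / (\<gamma> * real (k + 1)) * M)"
      using cpos \<gamma> by simp
    moreover have "(Fr 0 - fs) / (\<gamma> * real (k + 1) * m\<alpha>) \<le> (Fr 0 - fs) / (\<gamma> * real (k + 1)) * M"
    proof -
      have F0: "Fr 0 - fs \<ge> 0" using fs(2)[of "x 0"] FrE[of 0] by simp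
      have mM: "1 \<le> M * m\<alpha>"
      proof -
        have Mu: "M = max 1 (1/u)" unfolding M_def u_def using \<beta> \<gamma> sig L eta
          by (simp add: field_simps)
        have mu: "min 1 u \<le> m\<alpha>" using m\<alpha>in q by auto
        show ?thesis
        proof (cases "u \<ge> 1")
          case True
          hence "1 \<le> m\<alpha>" using mu by simp
          hence "1 * 1 \<le> M * m\<alpha>" using M1 by (intro mult_mono) auto
          thus ?thesis by simp
        next
          case False
          hence "M = 1/u" "u \<le> m\<alpha>" using Mu mu upos by auto
          hence "M * u \<le> M * m\<alpha>" "M * u = 1" using M1 upos by (auto intro: mult_left_mono)
          thus ?thesis by simp
        qed
      qed
      have "(Fr 0 - fs) / (\<gamma> * real (k + 1) * m\<alpha>) = (Fr 0 - fs) / (\<gamma> * real (k + 1)) * (1 / m\<alpha>)" by simp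
      also have "\<dots> \<le> (Fr 0 - fs) / (\<gamma> * real (k + 1)) * M"
      proof (rule mult_left_mono)
        show "1 / m\<alpha> \<le> M" using mM m\<alpha>pos by (simp add: divide_le_eq mult.commute)
        show "0 \<le> (Fr 0 - fs) / (\<gamma> * real (k + 1))" using F0 cpos by simp
      qed
      finally show ?thesis .
    qed
    ultimately show ?thesis using FrE[of 0] fs(1) unfolding m\<alpha>_def[symmetric] M_def[symmetric] by simp
  qed
qed

theorem lemma8:
  fixes f :: "real^'n \<Rightarrow> real" and g :: "real^'n \<Rightarrow> real^'n"
    and \<psi> :: "real^'n \<Rightarrow> ereal" and L \<eta> :: real
  assumes L_pos: "L > 0"
    and grad: "\<And>x. (f has_derivative (\<lambda>h. g x \<bullet> h)) (at x)"
    and lip: "\<And>x y. norm (g x - g y) \<le> L * norm (x - y)"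
    and psi_convex: "ereal_convex \<psi>" and psi_proper: "ereal_proper \<psi>"
    and psi_closed: "ereal_closed_fun \<psi>"
    and F_bdd: "\<exists>m::real. \<forall>x. ereal m \<le> Fobj f \<psi> x"
    and Omega_ne: "\<exists>x. Fobj f \<psi> x = Fstar f \<psi>"
    and eta: "0 \<le> \<eta>" "\<eta> < 1"
  shows
    "(\<forall>\<beta> \<gamma> \<sigma> x H d \<alpha>.
        alg1_run f g \<psi> \<beta> \<gamma> \<eta> x H d \<alpha> \<and> \<sigma> > 0 \<and> (\<forall>k. psd_ge (H k) \<sigma>) \<longrightarrow>
        (\<forall>k. Min ((\<lambda>t. \<bar>quadQ g \<psi> (x t) (H t) (d t)\<bar>) ` {..k})
               \<le> (Fobj f \<psi> (x 0) - Fstar f \<psi>) / ereal (\<gamma> * real (k + 1) * Min (\<alpha> ` {..k}))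
           \<and> (Fobj f \<psi> (x 0) - Fstar f \<psi>) / ereal (\<gamma> * real (k + 1) * Min (\<alpha> ` {..k}))
               \<le> (Fobj f \<psi> (x 0) - Fstar f \<psi>) / ereal (\<gamma> * real (k + 1))
                  * ereal (max 1 ((1 + sqrt \<eta>) * L / (2 * \<beta> * (1 - \<gamma>) * \<sigma>)))))
     \<and> (\<forall>v \<beta> \<gamma> x H0 H d.
        alg2_run v f g \<psi> \<beta> \<gamma> \<eta> x H0 H d \<longrightarrow>
        (\<forall>k. Min ((\<lambda>t. \<bar>quadQ g \<psi> (x t) (H t) (d t)\<bar>) ` {..k})
               \<le> (Fobj f \<psi> (x 0) - Fstar f \<psi>) / ereal (\<gamma> * real (k + 1))))"
  proof (intro conjI allI impI)
  fix \<beta> \<gamma> \<sigma> x H d \<alpha> k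
  assume "alg1_run f g \<psi> \<beta> \<gamma> \<eta> x H d \<alpha> \<and> \<sigma> > 0 \<and> (\<forall>k. psd_ge (H k) \<sigma>)"
  thus "Min ((\<lambda>t. \<bar>quadQ g \<psi> (x t) (H t) (d t)\<bar>) ` {..k})
               \<le> (Fobj f \<psi> (x 0) - Fstar f \<psi>) / ereal (\<gamma> * real (k + 1) * Min (\<alpha> ` {..k}))"
     "(Fobj f \<psi> (x 0) - Fstar f \<psi>) / ereal (\<gamma> * real (k + 1) * Min (\<alpha> ` {..k}))
               \<le> (Fobj f \<psi> (x 0) - Fstar f \<psi>) / ereal (\<gamma> * real (k + 1))
                  * ereal (max 1 ((1 + sqrt \<eta>) * L / (2 * \<beta> * (1 - \<gamma>) * \<sigma>)))"
    using part1[OF grad lip L_pos psi_proper psi_convex F_bdd eta, of \<beta> \<gamma> x H d \<alpha> \<sigma> k] by auto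
next
  fix v \<beta> \<gamma> x H0 H d k
  assume "alg2_run v f g \<psi> \<beta> \<gamma> \<eta> x H0 H d"
  thus "Min ((\<lambda>t. \<bar>quadQ g \<psi> (x t) (H t) (d t)\<bar>) ` {..k})
               \<le> (Fobj f \<psi> (x 0) - Fstar f \<psi>) / ereal (\<gamma> * real (k + 1))"
    by (rule part2[OF psi_proper F_bdd])
qed

end
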